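(* Let $p$ be an odd prime with $p\equiv2\pmod3$, let $\theta\in\mathrm{Aut}(\mathbb{F}_{p^m})$ have order dividing $p^s$, and let $\mathcal C$ be a skew $\theta$-cyclic code of length $3p^s$ over $\mathbb{F}_{p^m}$. (a) If $m$ is odd, then $x^{3p^s}-1=(x^{p^s}-1)(x^{2p^s}+x^{p^s}+1)$ with central coprime factors and $\mathcal C=\mathcal C_1\oplus\mathcal C_2$, where $\mathcal C_1,\mathcal C_2$ are left ideals of $\mathbb{F}_{p^m}[x;\theta]/\langle x^{p^s}-1\rangle$ and $\mathbb{F}_{p^m}[x;\theta]/\langle x^{2p^s}+x^{p^s}+1\rangle$ respectively. Moreover $|\mathcal C|=|\mathcal C_1||\mathcal C_2|$, $\mathcal C^\perp=\mathcal C_1^\perp\oplus\mathcal C_2^\perp$ where $\mathcal C_1^\perp,\mathcal C_2^\perp$ are left ideals of the same two rings respectively, and $\mathcal C$ is self-dual iff $\mathcal C_1=\mathcal C_1^\perp$ and $\mathcal C_2=\mathcal C_2^\perp$. (b) If $m$ is even, then with $\omega\in\mathbb{F}_{p^m}^*$ a primitive cube root of unity, $\mathcal C=\mathcal C_1\oplus\mathcal C_2\oplus\mathcal C_3$, where $\mathcal C_i$ is a left ideal of $\mathbb{F}_{p^m}[x;\theta]/\langle x^{p^s}-\omega^{i-1}\rangle$ ($i=1,2,3$); moreover $|\mathcal C|=|\mathcal C_1||\mathcal C_2||\mathcal C_3|$, $\mathcal C^\perp=\mathcal C_1^\perp\oplus\mathcal C_2^\perp\oplus\mathcal C_3^\perp$,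 and $\mathcal C$ is self-dual iff $\mathcal C_1=\mathcal C_1^\perp$, $\mathcal C_2=\mathcal C_3^\perp$, $\mathcal C_3=\mathcal C_2^\perp$.
   Context: $\mathbb{F}_{p^m}[x;\theta]$ is the skew polynomial ring with $xa=\theta(a)x$. A skew $\theta$-cyclic code of length $N$ over $\mathbb{F}_{p^m}$ is a left ideal of $\mathbb{F}_{p^m}[x;\theta]/\langle x^N-1\rangle$. The decompositions are via the Chinese Remainder isomorphism for the stated factorization. $\mathcal C^\perp$ is the Euclidean dual (again skew $\theta$-cyclic); $\mathcal C_i^\perp$ denotes its component in the corresponding factor ring (in (b), the factor $x^{p^s}-\omega^{1-i}$). Self-dual means $\mathcal C=\mathcal C^\perp$. *)

theory Defs
  imports "HOL-Computational_Algebra.Polynomial" "HOL-Library.Cardinality"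
begin

text \<open>Skew polynomial ring F[x;theta] with x a = theta(a) x, modelled on the
additive group of ordinary polynomials 'a poly with a twisted product:
(a x^i)(b x^j) = a theta^i(b) x^(i+j).\<close>

definition skew_mult :: "('a::comm_ring_1 \<Rightarrow> 'a) \<Rightarrow> 'a poly \<Rightarrow> 'a poly \<Rightarrow> 'a poly" where
  "skew_mult \<theta> f g =
     (\<Sum>i\<le>degree f. \<Sum>j\<le>degree g. monom (coeff f i * (\<theta> ^^ i) (coeff g j)) (i + j))"

definition Xp :: "nat \<Rightarrow> 'a::comm_ring_1 poly" where
  "Xp n = monom 1 n"

definition is_field_aut :: "('a::field \<Rightarrow> 'a) \<Rightarrow> bool" where
  "is_field_aut \<theta> \<longleftrightarrow> bij \<theta> \<and> (\<forall>a b. \<theta> (a + b) = \<theta> a + \<theta> b \<and> \<theta> (a * b) = \<theta> a * \<theta> b)"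

text \<open>Canonical representatives of F[x;theta]/<f> (f monic, central): polynomials of
degree below deg f.\<close>
definition residues :: "'a::comm_ring_1 poly \<Rightarrow> 'a poly set" where
  "residues f = {r. degree r < degree f}"

definition skew_mod :: "('a::comm_ring_1 \<Rightarrow> 'a) \<Rightarrow> 'a poly \<Rightarrow> 'a poly \<Rightarrow> 'a poly" where
  "skew_mod \<theta> f a = (THE r. degree r < degree f \<and> (\<exists>q. a = skew_mult \<theta> q f + r))"

definition left_ideal_mod :: "('a::comm_ring_1 \<Rightarrow> 'a) \<Rightarrow> 'a poly \<Rightarrow> 'a poly set \<Rightarrow> bool" where
  "left_ideal_mod \<theta> f I \<longleftrightarrow>
     I \<subseteq> residues f \<and> 0 \<in> I \<and> (\<forall>a\<in>I. \<forall>b\<in>I. a - b \<in> I) \<and>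
     (\<forall>r\<in>residues f. \<forall>a\<in>I. skew_mod \<theta> f (skew_mult \<theta> r a) \<in> I)"

definition skew_cyclic_code :: "('a::comm_ring_1 \<Rightarrow> 'a) \<Rightarrow> nat \<Rightarrow> 'a poly set \<Rightarrow> bool" where
  "skew_cyclic_code \<theta> N C \<longleftrightarrow> left_ideal_mod \<theta> (Xp N - 1) C"

text \<open>Euclidean dual of a code of length N (codewords identified with coefficient vectors).\<close>
definition euclid_dual :: "nat \<Rightarrow> 'a::comm_ring_1 poly set \<Rightarrow> 'a poly set" where
  "euclid_dual N C = {v. degree v < N \<and> (\<forall>c\<in>C. (\<Sum>i<N. coeff c i * coeff v i) = 0)}"

definition skew_central :: "('a::comm_ring_1 \<Rightarrow> 'a) \<Rightarrow> 'a poly \<Rightarrow> bool" where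
  "skew_central \<theta> f \<longleftrightarrow> (\<forall>g. skew_mult \<theta> f g = skew_mult \<theta> g f)"

definition skew_coprime :: "('a::comm_ring_1 \<Rightarrow> 'a) \<Rightarrow> 'a poly \<Rightarrow> 'a poly \<Rightarrow> bool" where
  "skew_coprime \<theta> f g \<longleftrightarrow> (\<exists>u v. skew_mult \<theta> u f + skew_mult \<theta> v g = 1)"

definition component :: "('a::comm_ring_1 \<Rightarrow> 'a) \<Rightarrow> 'a poly \<Rightarrow> 'a poly set \<Rightarrow> 'a poly set" where
  "component \<theta> f C = skew_mod \<theta> f ` C"

end

theory Submission
  imports Defs "HOL-Computational_Algebra.Primes"
begin


locale skewh =
  fixes th :: "'a::field \<Rightarrow> 'a"
  assumes th_add: "th (a + b) = th a + th b"
    and th_mul: "th (a * b) = th a * th b"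
    and th_one: "th 1 = 1"
begin

lemma th_zero[simp]: "th 0 = 0"
proof -
  have "th 0 + th 0 = th 0 + 0" using th_add[of 0 0] by simp
  then show ?thesis by (rule add_left_imp_eq)
qed

lemma thp_add: "(th ^^ i) (a + b) = (th ^^ i) a + (th ^^ i) b"
  by (induction i) (auto simp: th_add)
lemma thp_mul: "(th ^^ i) (a * b) = (th ^^ i) a * (th ^^ i) b"
  by (induction i) (auto simp: th_mul)
lemma thp_zero[simp]: "(th ^^ i) 0 = 0"
  by (induction i) auto
lemma thp_one[simp]: "(th ^^ i) 1 = 1"
  by (induction i) (auto simp: th_one)
lemma thp_minus: "(th ^^ i) (- a) = - (th ^^ i) a"
  using thp_add[of i a "-a"] by (simp add: eq_neg_iff_add_eq_0 add.commute)
lemma thp_diff: "(th ^^ i) (a - b) = (th ^^ i) a - (th ^^ i) b"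
  using thp_add[of i a "-b"] thp_minus[of i b] by simp

lemma coeff_mp[simp]: "coeff (map_poly (th ^^ i) g) j = (th ^^ i) (coeff g j)"
  by (simp add: coeff_map_poly)

lemma mp_add: "map_poly (th ^^ i) (g + h) = map_poly (th ^^ i) g + map_poly (th ^^ i) h"
  by (rule poly_eqI) (simp add: thp_add)
lemma mp_diff: "map_poly (th ^^ i) (g - h) = map_poly (th ^^ i) g - map_poly (th ^^ i) h"
  by (rule poly_eqI) (simp add: thp_diff)

abbreviation sm where "sm \<equiv> skew_mult th"

lemma rep0: "sm f g = (\<Sum>i\<le>degree f. monom (coeff f i) i * map_poly (th ^^ i) g)"
proof -
  have "(\<Sum>j\<le>degree g. monom (coeff f i * (th ^^ i) (coeff g j)) (i + j))
        = monom (coeff f i) i * map_poly (th ^^ i) g" for i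
  proof -
    have "(\<Sum>j\<le>degree g. monom (coeff f i * (th ^^ i) (coeff g j)) (i + j))
      = monom (coeff f i) i * (\<Sum>j\<le>degree g. monom (coeff (map_poly (th ^^ i) g) j) j)"
      by (simp add: sum_distrib_left mult_monom)
    also have "(\<Sum>j\<le>degree g. monom (coeff (map_poly (th ^^ i) g) j) j) = map_poly (th ^^ i) g"
      by (rule poly_as_sum_of_monoms') (rule map_poly_degree_leq)
    finally show ?thesis .
  qed
  then show ?thesis unfolding skew_mult_def by simp
qed

lemma rep: assumes "degree f \<le> n"
  shows "sm f g = (\<Sum>i\<le>n. monom (coeff f i) i * map_poly (th ^^ i) g)"
  unfolding rep0
  by (rule sum.mono_neutral_left) (use assms in \<open>auto simp: coeff_eq_0\<close>)

lemma sm_left_add: "sm (f + h) g = sm f g + sm h g"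
proof -
  let ?n = "max (degree f) (degree h)"
  have "degree (f + h) \<le> ?n" by (rule degree_add_le) auto
  then show ?thesis
    by (simp add: rep[of _ ?n] add_monom[symmetric] distrib_right sum.distrib)
qed

lemma sm_left_zero[simp]: "sm 0 g = 0"
  by (simp add: rep0)

lemma sm_left_minus: "sm (- f) g = - sm f g"
  using sm_left_add[of f "-f" g] by (simp add: eq_neg_iff_add_eq_0 add.commute)

lemma sm_left_diff: "sm (f - h) g = sm f g - sm h g"
  using sm_left_add[of f "-h" g] sm_left_minus[of h g] by simp

lemma sm_right_add: "sm f (g + h) = sm f g + sm f h"
  by (simp add: rep0 mp_add distrib_left sum.distrib)

lemma sm_right_zero[simp]: "sm f 0 = 0"
  by (simp add: rep0)

lemma sm_right_diff: "sm f (g - h) = sm f g - sm f h"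
  by (simp add: rep0 mp_diff right_diff_distrib sum_subtractf)

lemma sm_left_sum: "sm (\<Sum>k\<in>A. F k) g = (\<Sum>k\<in>A. sm (F k) g)"
  by (induction A rule: infinite_finite_induct) (auto simp: sm_left_add)

lemma sm_right_sum: "sm f (\<Sum>k\<in>A. F k) = (\<Sum>k\<in>A. sm f (F k))"
  by (induction A rule: infinite_finite_induct) (auto simp: sm_right_add)

lemma sm_monom: "sm (monom a i) (monom b j) = monom (a * (th ^^ i) b) (i + j)"
proof -
  have "sm (monom a i) (monom b j) = (\<Sum>k\<le>i. monom (coeff (monom a i) k) k * map_poly (th ^^ k) (monom b j))"
    by (rule rep) (simp add: degree_monom_le)
  also have "\<dots> = monom a i * map_poly (th ^^ i) (monom b j)"
    by (subst sum.remove[of _ i]) (auto simp: coeff_monom)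
  finally show ?thesis by (simp add: map_poly_monom mult_monom)
qed

lemma sm_assoc: "sm (sm f g) h = sm f (sm g h)"
proof -
  have f: "f = (\<Sum>i\<le>degree f. monom (coeff f i) i)" by (simp add: poly_as_sum_of_monoms)
  have g: "g = (\<Sum>i\<le>degree g. monom (coeff g i) i)" by (simp add: poly_as_sum_of_monoms)
  have h: "h = (\<Sum>i\<le>degree h. monom (coeff h i) i)" by (simp add: poly_as_sum_of_monoms)
  have m: "sm (sm (monom a i) (monom b j)) (monom c k) = sm (monom a i) (sm (monom b j) (monom c k))"
    for a b c i j k
    by (simp add: sm_monom thp_mul funpow_add mult.assoc add.assoc)
  have "sm (sm (\<Sum>i\<le>degree f. monom (coeff f i) i) (\<Sum>i\<le>degree g. monom (coeff g i) i)) (\<Sum>i\<le>degree h. monom (coeff h i) i)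
     = sm (\<Sum>i\<le>degree f. monom (coeff f i) i) (sm (\<Sum>i\<le>degree g. monom (coeff g i) i) (\<Sum>i\<le>degree h. monom (coeff h i) i))"
    by (simp only: sm_left_sum sm_right_sum m)
  then show ?thesis by (simp only: poly_as_sum_of_monoms)
qed

definition fixc :: "'a poly \<Rightarrow> bool" where
  "fixc f \<longleftrightarrow> (\<forall>i. th (coeff f i) = coeff f i)"

lemma fixc_thp: "fixc f \<Longrightarrow> (th ^^ i) (coeff f j) = coeff f j"
  by (induction i) (auto simp: fixc_def)

lemma sm_fix: assumes "fixc f" shows "sm q f = q * f"
proof -
  have "map_poly (th ^^ i) f = f" for i
    by (rule poly_eqI) (simp add: fixc_thp[OF assms])
  then have "sm q f = (\<Sum>i\<le>degree q. monom (coeff q i) i) * f"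
    by (simp add: rep0 sum_distrib_right)
  then show ?thesis by (simp add: poly_as_sum_of_monoms)
qed

lemma sm_fix_right: assumes "fixc f" shows "sm r (g * f) = sm r g * f"
  using sm_assoc[of r g f] by (simp add: sm_fix[OF assms])

definition ysub :: "nat \<Rightarrow> 'a poly \<Rightarrow> bool" where
  "ysub n e \<longleftrightarrow> (\<forall>i. coeff e i \<noteq> 0 \<longrightarrow> n dvd i)"

lemma sm_ysub: assumes "ysub n e" "th ^^ n = id" shows "sm e a = e * a"
proof -
  have "monom (coeff e i) i * map_poly (th ^^ i) a = monom (coeff e i) i * a" for i
  proof (cases "coeff e i = 0")
    case False
    then obtain k where "i = n * k" using assms(1) unfolding ysub_def by blast
    then have "th ^^ i = id" by (simp add: funpow_mult[symmetric] assms(2))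
    then show ?thesis by simp
  qed simp
  then have "sm e a = (\<Sum>i\<le>degree e. monom (coeff e i) i * a)"
    unfolding rep0 by (intro sum.cong) auto
  then have "sm e a = (\<Sum>i\<le>degree e. monom (coeff e i) i) * a"
    by (simp add: sum_distrib_right)
  then show ?thesis by (simp add: poly_as_sum_of_monoms)
qed

lemma sm_const: "sm [:c:] a = smult c a"
  by (simp add: rep0 monom_0)

lemma sm_x: "sm (monom 1 1) a = monom 1 1 * map_poly th a"
  by (simp add: rep[of _ 1] coeff_monom degree_monom_le)

end



lemma xm: "p * monom 1 1 = pCons 0 (p::'a::comm_ring_1 poly)" "monom 1 1 * p = pCons 0 p"
  by (simp_all add: monom_Suc monom_0)

lemma pCons_x: "pCons c (p::'a::comm_ring_1 poly) = [:c:] + p * monom 1 1"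
  by (simp only: xm) simp

lemma deg_mod_lt: "degree (f::'a::field poly) > 0 \<Longrightarrow> degree (a mod f) < degree f"
proof -
  assume d: "degree f > 0"
  then have "f \<noteq> 0" by auto
  then have "a mod f = 0 \<or> degree (a mod f) < degree f" by (rule degree_mod_less)
  then show ?thesis using d by auto
qed

lemma mod_add_poly: "degree (M::'a::field poly) > 0 \<Longrightarrow> (A + B) mod M = A mod M + B mod M"
proof -
  assume d: "degree M > 0"
  have "degree (A mod M + B mod M) < degree M"
    using deg_mod_lt[OF d] by (simp add: degree_add_less)
  then have "(A mod M + B mod M) mod M = A mod M + B mod M" by (rule mod_poly_less)
  then show ?thesis by (simp add: mod_add_eq)
qed

lemma mod_diff_poly: "degree (M::'a::field poly) > 0 \<Longrightarrow> (A - B) mod M = A mod M - B mod M"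
proof -
  assume d: "degree M > 0"
  have "degree (A mod M - B mod M) < degree M"
    using deg_mod_lt[OF d] by (simp add: degree_diff_less)
  then have "(A mod M - B mod M) mod M = A mod M - B mod M" by (rule mod_poly_less)
  then show ?thesis by (simp add: mod_diff_eq)
qed

lemma finite_residues: "finite (residues (f::'a::{finite,comm_ring_1} poly))"
proof -
  let ?N = "degree f"
  have "residues f \<subseteq> Poly ` {xs. set xs \<subseteq> UNIV \<and> length xs = ?N}"
  proof
    fix r assume "r \<in> residues f"
    then have d: "degree r < ?N" by (simp add: residues_def)
    have "r = Poly (map (coeff r) [0..<?N])"
      by (rule poly_eqI) (use d in \<open>auto simp: nth_default_def coeff_eq_0\<close>)
    then show "r \<in> Poly ` {xs. set xs \<subseteq> UNIV \<and> length xs = ?N}" by force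
  qed
  moreover have "finite {xs. set xs \<subseteq> (UNIV::'a set) \<and> length xs = ?N}"
    by (rule finite_lists_length_eq) simp
  ultimately show ?thesis by (meson finite_surj)
qed

definition cmp :: "'a::field poly \<Rightarrow> 'a poly set \<Rightarrow> 'a poly set" where
  "cmp f I = (\<lambda>a. a mod f) ` I"

context skewh
begin

definition LI :: "'a poly \<Rightarrow> 'a poly set \<Rightarrow> bool" where
  "LI M I \<longleftrightarrow> I \<subseteq> residues M \<and> 0 \<in> I \<and> (\<forall>a\<in>I. \<forall>b\<in>I. a - b \<in> I) \<and>
     (\<forall>r. \<forall>a\<in>I. sm r a mod M \<in> I)"

definition good :: "'a poly \<Rightarrow> bool" where
  "good f \<longleftrightarrow> fixc f \<and> degree f > 0"

lemma smod_eq: assumes "good f" shows "skew_mod th f a = a mod f"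
proof -
  have fx: "fixc f" and d: "degree f > 0" using assms by (auto simp: good_def)
  show ?thesis unfolding skew_mod_def
  proof (rule the_equality)
    show "degree (a mod f) < degree f \<and> (\<exists>q. a = sm q f + a mod f)"
      using deg_mod_lt[OF d] by (auto simp: sm_fix[OF fx] intro!: exI[of _ "a div f"])
  next
    fix r assume "degree r < degree f \<and> (\<exists>q. a = sm q f + r)"
    then obtain q where r: "degree r < degree f" "a = q * f + r" by (auto simp: sm_fix[OF fx])
    then have "a mod f = r mod f" by simp
    then show "r = a mod f" using mod_poly_less[OF r(1)] by simp
  qed
qed

lemma comp_eq: "good f \<Longrightarrow> component th f I = cmp f I"
  by (simp add: component_def cmp_def smod_eq)

lemma LI_sub: "LI M I \<Longrightarrow> I \<subseteq> residues M" unfolding LI_def by blast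
lemma LI_zero: "LI M I \<Longrightarrow> 0 \<in> I" unfolding LI_def by blast
lemma LI_diff: "LI M I \<Longrightarrow> a \<in> I \<Longrightarrow> b \<in> I \<Longrightarrow> a - b \<in> I" unfolding LI_def by blast
lemma LI_mult: "LI M I \<Longrightarrow> a \<in> I \<Longrightarrow> sm r a mod M \<in> I" unfolding LI_def by blast
lemma LI_I: "I \<subseteq> residues M \<Longrightarrow> 0 \<in> I \<Longrightarrow> (\<And>a b. a \<in> I \<Longrightarrow> b \<in> I \<Longrightarrow> a - b \<in> I) \<Longrightarrow>
  (\<And>r a. a \<in> I \<Longrightarrow> sm r a mod M \<in> I) \<Longrightarrow> LI M I" unfolding LI_def by blast

lemma LI_add: "LI M I \<Longrightarrow> a \<in> I \<Longrightarrow> b \<in> I \<Longrightarrow> a + b \<in> I"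
  unfolding LI_def by (metis diff_0 diff_minus_eq_add)

lemma LI_left_ideal: "good M \<Longrightarrow> LI M I \<Longrightarrow> left_ideal_mod th M I"
  by (simp add: LI_def left_ideal_mod_def smod_eq)

lemma mod_compat: assumes "fixc M" shows "sm r a mod M = sm r (a mod M) mod M"
proof -
  have "sm r a = sm r (a div M * M + a mod M)" by simp
  also have "\<dots> = sm r (a div M) * M + sm r (a mod M)"
    by (simp only: sm_right_add sm_fix_right[OF assms])
  finally show ?thesis by simp
qed

lemma LI_comp: assumes "LI M I" "good f" "f dvd M"
  shows "LI f (cmp f I)"
proof -
  have fx: "fixc f" and d: "degree f > 0" using assms(2) unfolding good_def by auto
  have 1: "cmp f I \<subseteq> residues f"
  proof
    fix z assume "z \<in> cmp f I"
    then obtain a where "z = a mod f" by (metis cmp_def imageE)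
    then show "z \<in> residues f" using deg_mod_lt[OF d] by (simp add: residues_def)
  qed
  have 2: "0 \<in> cmp f I"
  proof -
    have "0 \<in> I" using assms(1) unfolding LI_def by blast
    then have "0 mod f \<in> cmp f I" unfolding cmp_def by (rule imageI)
    then show ?thesis by simp
  qed
  have 3: "x - y \<in> cmp f I" if xy: "x \<in> cmp f I" "y \<in> cmp f I" for x y
  proof -
    obtain a where a: "a \<in> I" "x = a mod f" using xy(1) unfolding cmp_def by blast
    obtain b where b: "b \<in> I" "y = b mod f" using xy(2) unfolding cmp_def by blast
    have "a - b \<in> I" using assms(1) a(1) b(1) by (rule LI_diff)
    then have "(a - b) mod f \<in> cmp f I" unfolding cmp_def by (rule imageI)
    moreover have "x - y = (a - b) mod f" unfolding a(2) b(2) by (rule mod_diff_poly[OF d, symmetric])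
    ultimately show ?thesis by simp
  qed
  have 4: "sm r x mod f \<in> cmp f I" if x: "x \<in> cmp f I" for r x
  proof -
    obtain a where a: "a \<in> I" "x = a mod f" using x unfolding cmp_def by blast
    have "sm r a mod M \<in> I" using assms(1) a(1) by (rule LI_mult)
    then have "(sm r a mod M) mod f \<in> cmp f I" unfolding cmp_def by (rule imageI)
    moreover have "(sm r a mod M) mod f = sm r x mod f"
      unfolding mod_mod_cancel[OF assms(3), of "sm r a"] a(2) by (rule mod_compat[OF fx])
    ultimately show ?thesis by simp
  qed
  show ?thesis using 1 2 3 4 by (intro LI_I) auto
qed
lemma LI_residues: "degree M > 0 \<Longrightarrow> LI M (residues M)"
  using deg_mod_lt by (auto simp: LI_def residues_def degree_diff_less)

lemma comp_residues: assumes "good f" "f dvd M" "M \<noteq> 0"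
  shows "cmp f (residues M) = residues f"
proof -
  have d: "degree f > 0" using assms by (auto simp: good_def)
  have le: "degree f \<le> degree M" using dvd_imp_degree_le[OF assms(2,3)] .
  show ?thesis
  proof
    show "cmp f (residues M) \<subseteq> residues f" using deg_mod_lt[OF d]
      by (auto simp: cmp_def residues_def)
    show "residues f \<subseteq> cmp f (residues M)"
    proof
      fix r assume "r \<in> residues f"
      then have "degree r < degree f" by (simp add: residues_def)
      then have "r = r mod f" "r \<in> residues M"
        using mod_poly_less[of r f] le by (auto simp: residues_def)
      then show "r \<in> cmp f (residues M)" unfolding cmp_def by blast
    qed
  qed
qed

definition bez :: "nat \<Rightarrow> 'a poly \<Rightarrow> 'a poly \<Rightarrow> 'a poly \<Rightarrow> 'a poly \<Rightarrow> bool" where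
  "bez n f1 f2 e1 e2 \<longleftrightarrow> e1 + e2 = 1 \<and> f2 dvd e1 \<and> f1 dvd e2 \<and> ysub n e1 \<and> ysub n e2"

lemma bez_sym: "bez n f1 f2 e1 e2 \<Longrightarrow> bez n f2 f1 e2 e1"
  by (auto simp: bez_def add.commute)

lemma bez_dvd: assumes "bez n f1 f2 e1 e2" "f1 dvd d" "f2 dvd d"
  shows "f1 * f2 dvd d"
proof -
  have e: "e1 + e2 = 1" "f2 dvd e1" "f1 dvd e2" using assms(1) unfolding bez_def by auto
  have "d = e1 * d + e2 * d" using e(1) by (metis distrib_right mult_1)
  moreover have "f1 * f2 dvd e1 * d"
    using mult_dvd_mono[OF assms(2) e(2)] by (simp add: ac_simps)
  moreover have "f1 * f2 dvd e2 * d"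
    by (rule mult_dvd_mono[OF e(3) assms(3)])
  ultimately show ?thesis by (metis dvd_add)
qed

lemma crt2: assumes "LI M I" "good f1" "good f2" "f1 dvd M" "f2 dvd M"
   "th ^^ n = id" "bez n f1 f2 e1 e2"
  shows "(\<lambda>a. (a mod f1, a mod f2)) ` I = cmp f1 I \<times> cmp f2 I"
proof
  show "(\<lambda>a. (a mod f1, a mod f2)) ` I \<subseteq> cmp f1 I \<times> cmp f2 I"
    by (auto simp: cmp_def)
  have d1: "degree f1 > 0" and d2: "degree f2 > 0" using assms by (auto simp: good_def)
  show "cmp f1 I \<times> cmp f2 I \<subseteq> (\<lambda>a. (a mod f1, a mod f2)) ` I"
  proof
    fix x assume "x \<in> cmp f1 I \<times> cmp f2 I"
    then obtain a b where ab: "a \<in> I" "b \<in> I" "x = (a mod f1, b mod f2)"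
      unfolding cmp_def by blast
    have ys: "ysub n e1" "ysub n e2" using assms(7) by (auto simp: bez_def)
    define c where "c = sm e1 a mod M + sm e2 b mod M"
    have cI: "c \<in> I" unfolding c_def
      using assms(1) ab by (intro LI_add LI_mult)
    have c1: "c mod f1 = (e1 * a + e2 * b) mod f1"
    proof -
      have "c mod f1 = (sm e1 a mod M) mod f1 + (sm e2 b mod M) mod f1"
        unfolding c_def by (rule mod_add_poly[OF d1])
      also have "\<dots> = sm e1 a mod f1 + sm e2 b mod f1" by (simp only: mod_mod_cancel[OF assms(4)])
      also have "\<dots> = (sm e1 a + sm e2 b) mod f1" by (rule mod_add_poly[OF d1, symmetric])
      finally show ?thesis by (simp only: sm_ysub[OF ys(1) assms(6)] sm_ysub[OF ys(2) assms(6)])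
    qed
    have c2: "c mod f2 = (e1 * a + e2 * b) mod f2"
    proof -
      have "c mod f2 = (sm e1 a mod M) mod f2 + (sm e2 b mod M) mod f2"
        unfolding c_def by (rule mod_add_poly[OF d2])
      also have "\<dots> = sm e1 a mod f2 + sm e2 b mod f2" by (simp only: mod_mod_cancel[OF assms(5)])
      also have "\<dots> = (sm e1 a + sm e2 b) mod f2" by (rule mod_add_poly[OF d2, symmetric])
      finally show ?thesis by (simp only: sm_ysub[OF ys(1) assms(6)] sm_ysub[OF ys(2) assms(6)])
    qed
    have e: "e1 = 1 - e2" "e2 = 1 - e1" using assms(7) unfolding bez_def by (simp_all add: eq_diff_eq add.commute)
    have "f1 dvd e1 * a + e2 * b - a"
    proof -
      have "e1 * a + e2 * b - a = e2 * (b - a)" by (simp add: e(1) algebra_simps)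
      then show ?thesis using assms(7) by (simp add: bez_def)
    qed
    then have "(e1 * a + e2 * b) mod f1 = a mod f1" by (simp only: mod_eq_dvd_iff)
    then have "c mod f1 = a mod f1" using c1 by simp
    moreover have "f2 dvd e1 * a + e2 * b - b"
    proof -
      have "e1 * a + e2 * b - b = e1 * (a - b)" by (simp add: e(2) algebra_simps)
      then show ?thesis using assms(7) by (simp add: bez_def)
    qed
    then have "(e1 * a + e2 * b) mod f2 = b mod f2" by (simp only: mod_eq_dvd_iff)
    then have "c mod f2 = b mod f2" using c2 by simp
    ultimately have "x = (\<lambda>a. (a mod f1, a mod f2)) c" using ab(3) by simp
    then show "x \<in> (\<lambda>a. (a mod f1, a mod f2)) ` I" using cI by (rule image_eqI)
  qed
qed

end



lemma dvd_small: "(M::'a::field poly) dvd d \<Longrightarrow> degree d < degree M \<Longrightarrow> d = 0"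
  using dvd_imp_degree_le[of M d] by (cases "d = 0") auto

lemma one_eq_const: "(1::'a::comm_ring_1 poly) = [:1:]" by simp

lemma deg_xc: "n > 0 \<Longrightarrow> degree (monom (1::'a::field) n - [:c:]) = n"
  unfolding diff_conv_add_uminus
  by (subst degree_add_eq_left) (auto simp: degree_monom_eq)

lemma deg_M: "N > 0 \<Longrightarrow> degree (Xp N - 1 :: 'a::field poly) = N"
  unfolding Xp_def one_eq_const by (rule deg_xc)

context skewh
begin

lemma fixc_monom: "th c = c \<Longrightarrow> fixc (monom c k)"
  by (simp add: fixc_def coeff_monom)
lemma fixc_const: "th c = c \<Longrightarrow> fixc [:c:]"
  by (simp add: fixc_def coeff_pCons split: nat.split)
lemma fixc_one: "fixc 1"
  by (simp add: fixc_def th_one coeff_1)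
lemma fixc_add: "fixc f \<Longrightarrow> fixc g \<Longrightarrow> fixc (f + g)"
  by (simp add: fixc_def th_add)
lemma fixc_diff: "fixc f \<Longrightarrow> fixc g \<Longrightarrow> fixc (f - g)"
  using thp_diff[of 1] by (simp add: fixc_def)
lemma fixc_Xp: "fixc (Xp k)"
  by (simp add: Xp_def fixc_monom th_one)

lemma ysub_monom: "n dvd k \<Longrightarrow> ysub n (monom c k)"
  by (simp add: ysub_def coeff_monom)
lemma ysub_Xp: "n dvd k \<Longrightarrow> ysub n (Xp k)"
  by (simp add: Xp_def ysub_monom)
lemma ysub_const: "ysub n [:c:]"
  by (simp add: ysub_def coeff_pCons split: nat.split)
lemma ysub_one: "ysub n 1"
  by (simp add: ysub_def coeff_1)
lemma ysub_add: assumes "ysub n f" "ysub n g" shows "ysub n (f + g)"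
  unfolding ysub_def
proof (intro allI impI)
  fix i assume h: "coeff (f + g) i \<noteq> 0"
  show "n dvd i"
  proof (rule ccontr)
    assume "\<not> n dvd i"
    then have "coeff f i = 0" "coeff g i = 0" using assms unfolding ysub_def by blast+
    then show False using h by simp
  qed
qed
lemma ysub_diff: assumes "ysub n f" "ysub n g" shows "ysub n (f - g)"
  unfolding ysub_def
proof (intro allI impI)
  fix i assume h: "coeff (f - g) i \<noteq> 0"
  show "n dvd i"
  proof (rule ccontr)
    assume "\<not> n dvd i"
    then have "coeff f i = 0" "coeff g i = 0" using assms unfolding ysub_def by blast+
    then show False using h by simp
  qed
qed
lemma ysub_smult: "ysub n f \<Longrightarrow> ysub n (smult c f)"
  by (auto simp: ysub_def)

lemma compI: "a \<in> I \<Longrightarrow> a mod f \<in> cmp f I"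
  unfolding cmp_def by (rule imageI)

lemma inj2: assumes "bez n f1 f2 e1 e2" "M = f1 * f2" "a \<in> residues M" "b \<in> residues M"
   "a mod f1 = b mod f1" "a mod f2 = b mod f2"
  shows "a = b"
proof -
  have "f1 dvd a - b" "f2 dvd a - b" using assms(5,6) by (simp_all add: mod_eq_dvd_iff)
  then have "M dvd a - b" using bez_dvd[OF assms(1)] assms(2) by simp
  moreover have "degree (a - b) < degree M" using assms(3,4)
    by (simp add: residues_def degree_diff_less)
  ultimately have "a - b = 0" by (rule dvd_small)
  then show ?thesis by simp
qed

lemma inj3: assumes "bez n f1 G e1 e2" "bez n' f2 f3 e3 e4" "M = f1 * G" "G = f2 * f3"
   "a \<in> residues M" "b \<in> residues M"
   "a mod f1 = b mod f1" "a mod f2 = b mod f2" "a mod f3 = b mod f3"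
  shows "a = b"
proof -
  have "f1 dvd a - b" "f2 dvd a - b" "f3 dvd a - b" using assms(7-9) by (simp_all add: mod_eq_dvd_iff)
  then have "G dvd a - b" using bez_dvd[OF assms(2)] assms(4) by simp
  then have "M dvd a - b" using bez_dvd[OF assms(1)] assms(3) \<open>f1 dvd a - b\<close> by simp
  moreover have "degree (a - b) < degree M" using assms(5,6)
    by (simp add: residues_def degree_diff_less)
  ultimately have "a - b = 0" by (rule dvd_small)
  then show ?thesis by simp
qed

lemma crt3: assumes "LI M I" "good f1" "good f2" "good f3" "good G" "M = f1 * G" "G = f2 * f3"
   "th ^^ n = id" "bez n f1 G e1 e2" "bez n f2 f3 e3 e4"
  shows "(\<lambda>a. (a mod f1, a mod f2, a mod f3)) ` I = cmp f1 I \<times> cmp f2 I \<times> cmp f3 I"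
proof
  show "(\<lambda>a. (a mod f1, a mod f2, a mod f3)) ` I \<subseteq> cmp f1 I \<times> cmp f2 I \<times> cmp f3 I"
    by (auto simp: cmp_def)
  have dG: "G dvd M" "f1 dvd M" using assms(6) by simp_all
  have d23: "f2 dvd G" "f3 dvd G" using assms(7) by simp_all
  have LIG: "LI G (cmp G I)" using assms(1) assms(5) dG(1) by (rule LI_comp)
  have c2: "(\<lambda>a. (a mod f2, a mod f3)) ` cmp G I = cmp f2 (cmp G I) \<times> cmp f3 (cmp G I)"
    using LIG assms(3,4) d23 assms(8,10) by (rule crt2)
  have c1: "(\<lambda>a. (a mod f1, a mod G)) ` I = cmp f1 I \<times> cmp G I"
    using assms(1,2,5) dG(2,1) assms(8,9) by (rule crt2)
  show "cmp f1 I \<times> cmp f2 I \<times> cmp f3 I \<subseteq> (\<lambda>a. (a mod f1, a mod f2, a mod f3)) ` I"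
  proof
    fix x assume "x \<in> cmp f1 I \<times> cmp f2 I \<times> cmp f3 I"
    then obtain x1 x2 x3 where xs: "x = (x1, x2, x3)" "x1 \<in> cmp f1 I" "x2 \<in> cmp f2 I" "x3 \<in> cmp f3 I"
      by auto
    obtain a where a: "a \<in> I" "x1 = a mod f1" using xs(2) unfolding cmp_def by (rule imageE)
    obtain b where b: "b \<in> I" "x2 = b mod f2" using xs(3) unfolding cmp_def by (rule imageE)
    obtain c where c: "c \<in> I" "x3 = c mod f3" using xs(4) unfolding cmp_def by (rule imageE)
    have "b mod G \<in> cmp G I" "c mod G \<in> cmp G I" using b(1) c(1) by (simp_all add: compI)
    then have "(b mod G mod f2, c mod G mod f3) \<in> cmp f2 (cmp G I) \<times> cmp f3 (cmp G I)"
      by (simp add: compI)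
    then have "(b mod G mod f2, c mod G mod f3) \<in> (\<lambda>a. (a mod f2, a mod f3)) ` cmp G I"
      unfolding c2 .
    then obtain d where d: "d \<in> cmp G I" "(b mod G mod f2, c mod G mod f3) = (d mod f2, d mod f3)"
      by (rule imageE)
    obtain d0 where d0: "d0 \<in> I" "d = d0 mod G" using d(1) unfolding cmp_def by (rule imageE)
    have "(a mod f1, d0 mod G) \<in> cmp f1 I \<times> cmp G I"
      using a(1) d0(1) by (simp add: compI)
    then have "(a mod f1, d0 mod G) \<in> (\<lambda>a. (a mod f1, a mod G)) ` I" unfolding c1 .
    then obtain z where z: "z \<in> I" "(a mod f1, d0 mod G) = (z mod f1, z mod G)"
      by (rule imageE)
    have "z mod f2 = b mod f2"
      using z(2) d(2) d0(2) mod_mod_cancel[OF d23(1), of z] mod_mod_cancel[OF d23(1), of b] by simp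
    moreover have "z mod f3 = c mod f3"
      using z(2) d(2) d0(2) mod_mod_cancel[OF d23(2), of z] mod_mod_cancel[OF d23(2), of c] by simp
    ultimately have "x = (\<lambda>a. (a mod f1, a mod f2, a mod f3)) z" using xs(1) a(2) b(2) c(2) z(2) by simp
    then show "x \<in> (\<lambda>a. (a mod f1, a mod f2, a mod f3)) ` I" using z(1) by (rule image_eqI)
  qed
qed

definition Tm :: "nat \<Rightarrow> 'a poly \<Rightarrow> 'a poly" where
  "Tm N a = sm (monom 1 1) a mod (Xp N - 1)"

lemma T_coeff: assumes "N > 0" "degree a < N" "i < N"
  shows "coeff (Tm N a) i = (if i = 0 then th (coeff a (N - 1)) else th (coeff a (i - 1)))"
proof -
  define w where "w = map_poly th a"
  define c where "c = coeff w (N - 1)"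
  define R where "R = pCons 0 w - monom c N + [:c:]"
  have dw: "degree w < N" using assms(2) map_poly_degree_leq[of th a] unfolding w_def by linarith
  have sx: "sm (monom 1 1) a = pCons 0 w" unfolding w_def sm_x xm by simp
  have s: "smult c (Xp N - 1) = monom c N - [:c:]" unfolding Xp_def
    by (simp add: smult_diff_right smult_monom)
  have alg: "X = (A - B) + (X - A + B)" for X A B :: "'a poly" by simp
  have eq: "pCons 0 w = smult c (Xp N - 1) + R"
    unfolding R_def s by (rule alg)
  have "degree R \<le> N - 1"
  proof (rule degree_le, intro allI impI)
    fix j assume j: "N - 1 < j"
    show "coeff R j = 0"
    proof (cases "j = N")
      case True
      then show ?thesis using assms(1) unfolding R_def c_def
        by (cases N) (auto simp: coeff_monom)
    next
      case False
      then have "j > N" using j by simp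
      then have "coeff w (j - 1) = 0" using dw by (intro coeff_eq_0) simp
      then show ?thesis using \<open>j > N\<close> unfolding R_def
        by (cases j) (auto simp: coeff_monom)
    qed
  qed
  then have dR: "degree R < degree (Xp N - 1 :: 'a poly)" using assms(1) deg_M[OF assms(1), where 'a='a] by linarith
  have "Tm N a = R mod (Xp N - 1)"
    unfolding Tm_def sx mod_eq_dvd_iff eq by (simp add: dvd_smult)
  also have "\<dots> = R" using dR by (rule mod_poly_less)
  finally have "coeff (Tm N a) i = coeff R i" by simp
  also have "\<dots> = (if i = 0 then c else coeff w (i - 1))"
    using assms(3) unfolding R_def by (cases i) (auto simp: coeff_monom)
  finally show ?thesis unfolding c_def w_def by (simp add: coeff_map_poly)
qed

lemma T_deg: "N > 0 \<Longrightarrow> degree (Tm N a) < N"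
  unfolding Tm_def using deg_mod_lt[of "Xp N - 1" "sm (monom 1 1) a"] deg_M[of N, where 'a='a] by simp

lemma th_sum: "th (\<Sum>i\<in>A. f i) = (\<Sum>i\<in>A. th (f i))"
  by (induction A rule: infinite_finite_induct) (auto simp: th_add)

lemma ip_T: assumes "N > 0" "degree c < N" "degree v < N"
  shows "(\<Sum>i<N. coeff (Tm N c) i * coeff (Tm N v) i) = th (\<Sum>i<N. coeff c i * coeff v i)"
proof -
  obtain K where K: "N = Suc K" using assms(1) by (cases N) auto
  have "(\<Sum>i<N. coeff (Tm N c) i * coeff (Tm N v) i)
      = (\<Sum>i<N. (if i = 0 then th (coeff c K) * th (coeff v K) else th (coeff c (i - 1)) * th (coeff v (i - 1))))"
    by (rule sum.cong) (use assms K in \<open>auto simp: T_coeff\<close>)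
  also have "\<dots> = th (coeff c K) * th (coeff v K) + (\<Sum>i<K. th (coeff c i) * th (coeff v i))"
    unfolding K sum.lessThan_Suc_shift by simp
  also have "\<dots> = (\<Sum>i<N. th (coeff c i * coeff v i))"
    unfolding K by (simp add: th_mul)
  also have "\<dots> = th (\<Sum>i<N. coeff c i * coeff v i)" by (simp add: th_sum)
  finally show ?thesis .
qed

lemma T_inj: assumes "N > 0" "inj th" shows "inj_on (Tm N) (residues (Xp N - 1))"
proof (rule inj_onI)
  fix a b assume a: "a \<in> residues (Xp N - 1)" and b: "b \<in> residues (Xp N - 1)"
    and ab: "Tm N a = Tm N b"
  have da: "degree a < N" and db: "degree b < N" using a b deg_M[OF assms(1), where 'a='a] by (auto simp: residues_def)
  show "a = b"
  proof (rule poly_eqI)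
    fix j
    show "coeff a j = coeff b j"
    proof (cases "j < N")
      case True
      define i where "i = (if j = N - 1 then 0 else Suc j)"
      have i: "i < N" using True unfolding i_def by auto
      have "coeff (Tm N a) i = coeff (Tm N b) i" using ab by simp
      then have "th (coeff a j) = th (coeff b j)"
        using T_coeff[OF assms(1) da i] T_coeff[OF assms(1) db i] True unfolding i_def
        by (auto split: if_splits)
      then show ?thesis using assms(2) by (simp add: inj_eq)
    next
      case False
      then show ?thesis using da db by (simp add: coeff_eq_0)
    qed
  qed
qed

lemma LI_from_T: assumes N: "N \<ge> 2" and sub: "I \<subseteq> residues (Xp N - 1)" and z: "0 \<in> I"
  and df: "\<And>a b. a \<in> I \<Longrightarrow> b \<in> I \<Longrightarrow> a - b \<in> I"
  and sc: "\<And>c a. a \<in> I \<Longrightarrow> smult c a \<in> I"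
  and tc: "\<And>a. a \<in> I \<Longrightarrow> Tm N a \<in> I"
  shows "LI (Xp N - 1) I"
proof -
  let ?M = "Xp N - 1 :: 'a poly"
  have dM: "degree ?M = N" using N by (simp add: deg_M)
  have fM: "fixc ?M" by (intro fixc_diff fixc_Xp fixc_one)
  have fx: "fixc (monom 1 1)" by (rule fixc_monom) (simp add: th_one)
  have addI: "a + b \<in> I" if "a \<in> I" "b \<in> I" for a b
  proof -
    have "0 - b \<in> I" using z that(2) by (rule df)
    with that(1) have "a - (0 - b) \<in> I" by (rule df)
    then show ?thesis by simp
  qed
  have main: "\<forall>a\<in>I. sm r a mod ?M \<in> I" for r
  proof (induction r rule: pCons_induct)
    case 0
    then show ?case using z by simp
  next
    case (pCons c r)
    show ?case
    proof
      fix a assume a: "a \<in> I"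
      have da: "degree a < N" using a sub dM by (auto simp: residues_def)
      have "sm (pCons c r) a = smult c a + sm r (sm (monom 1 1) a)"
      proof -
        have "pCons c r = [:c:] + sm r (monom 1 1)"
          by (subst pCons_x) (simp only: sm_fix[OF fx])
        then have "sm (pCons c r) a = sm [:c:] a + sm (sm r (monom 1 1)) a"
          by (simp only: sm_left_add)
        then show ?thesis by (simp only: sm_const sm_assoc)
      qed
      moreover have "(smult c a + sm r (sm (monom 1 1) a)) mod ?M = smult c a mod ?M + sm r (sm (monom 1 1) a) mod ?M"
        by (rule mod_add_poly) (use dM N in simp)
      ultimately have "sm (pCons c r) a mod ?M = smult c a mod ?M + sm r (sm (monom 1 1) a) mod ?M"
        by (simp only:)
      also have "smult c a mod ?M = smult c a"
        using da dM degree_smult_le[of c a] by (intro mod_poly_less) simp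
      also have "sm r (sm (monom 1 1) a) mod ?M = sm r (Tm N a) mod ?M"
        unfolding Tm_def by (rule mod_compat[OF fM])
      finally have eq: "sm (pCons c r) a mod ?M = smult c a + sm r (Tm N a) mod ?M" .
      have "sm r (Tm N a) mod ?M \<in> I" using pCons(2) tc[OF a] by (rule bspec)
      then show "sm (pCons c r) a mod ?M \<in> I" unfolding eq by (rule addI[OF sc[OF a]])
    qed
  qed
  show ?thesis
  proof (rule LI_I[OF sub z])
    show "a - b \<in> I" if "a \<in> I" "b \<in> I" for a b using that by (rule df)
    show "sm r a mod ?M \<in> I" if "a \<in> I" for r a using main[of r] that by (rule bspec)
  qed
qed

end



lemma Xp_mult: "Xp a * Xp b = (Xp (a + b) :: 'a::comm_ring_1 poly)"
  by (simp add: Xp_def mult_monom)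

lemma num_const: "(numeral k :: 'a::comm_ring_1 poly) = [:numeral k:]"
  by (rule numeral_poly)

lemma const_mult: "[:a:] * [:b:] = [:a * b::'a::comm_ring_1:]"
  by simp

lemma bez_id: fixes y :: "'a::field poly"
  assumes "(3::'a) \<noteq> 0"
  shows "([:-(1/3):] * (y + 2)) * (y - 1) + [:1/3:] * (y * y + y + 1) = 1"
proof -
  have m: "[:-(1/3)::'a:] = - [:1/3:]" by simp
  have "([:-(1/3):] * (y + 2)) * (y - 1) + [:1/3:] * (y * y + y + 1) = [:1/3:] * 3"
    unfolding m by algebra
  also have "\<dots> = 1" using assms by (simp add: num_const)
  finally show ?thesis .
qed

lemma cube: fixes y :: "'a::comm_ring_1 poly"
  shows "(y - 1) * (y * y + y + 1) = y * y * y - 1"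
  by (simp add: algebra_simps)

lemma omega_prod: fixes y :: "'a::field poly"
  assumes "w ^ 3 = 1" "w \<noteq> 1"
  shows "(y - [:w:]) * (y - [:w^2:]) = y * y + y + 1"
proof -
  have s: "1 + w + w^2 = 0"
  proof -
    have "(w - 1) * (1 + w + w^2) = w^3 - 1" by (simp add: algebra_simps power2_eq_square power3_eq_cube)
    then show ?thesis using assms by (simp add: add.assoc)
  qed
  have a: "[:w:] + [:w^2:] = (-1 :: 'a poly)"
  proof -
    have "w + w^2 = -1" using s by algebra
    then have "[:w:] + [:w^2:] = [:-1:]" by simp
    also have "[:-1::'a:] = - 1" by (simp add: one_eq_const)
    finally show ?thesis .
  qed
  have b: "[:w:] * [:w^2:] = (1 :: 'a poly)"
    using assms(1) by (simp add: power2_eq_square power3_eq_cube mult.assoc)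
  have "(y - [:w:]) * (y - [:w^2:]) = y * y - ([:w:] + [:w^2:]) * y + [:w:] * [:w^2:]"
    by algebra
  then show ?thesis unfolding a b by simp
qed




context skewh
begin

lemma ysub_mult: assumes "ysub n f" "ysub n g" shows "ysub n (f * g)"
  unfolding ysub_def
proof (intro allI impI)
  fix k assume h: "coeff (f * g) k \<noteq> 0"
  show "n dvd k"
  proof (rule ccontr)
    assume nk: "\<not> n dvd k"
    have "coeff f i * coeff g (k - i) = 0" if "i \<in> {..k}" for i
    proof (rule ccontr)
      assume "coeff f i * coeff g (k - i) \<noteq> 0"
      then have "coeff f i \<noteq> 0" "coeff g (k - i) \<noteq> 0" by auto
      then have "n dvd i" "n dvd (k - i)" using assms unfolding ysub_def by blast+
      then have "n dvd (i + (k - i))" by (rule dvd_add)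
      then show False using nk that by simp
    qed
    then have "coeff (f * g) k = 0" unfolding coeff_mult by (rule sum.neutral[OF ballI])
    then show False using h by simp
  qed
qed

lemma LI_C: assumes N: "N \<ge> 2" and L: "left_ideal_mod th (Xp N - 1) C"
  shows "LI (Xp N - 1) C"
proof -
  let ?M = "Xp N - 1 :: 'a poly"
  have dM: "degree ?M = N" using N by (simp add: deg_M)
  have gM: "good ?M" unfolding good_def using dM N by (auto intro!: fixc_diff fixc_Xp fixc_one)
  have L': "C \<subseteq> residues ?M" "0 \<in> C" "\<And>a b. a \<in> C \<Longrightarrow> b \<in> C \<Longrightarrow> a - b \<in> C"
     "\<And>r a. r \<in> residues ?M \<Longrightarrow> a \<in> C \<Longrightarrow> sm r a mod ?M \<in> C"
    using L unfolding left_ideal_mod_def smod_eq[OF gM] by blast+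
  show ?thesis
  proof (rule LI_from_T[OF N L'(1,2)])
    show "a - b \<in> C" if "a \<in> C" "b \<in> C" for a b using that by (rule L'(3))
    show "smult c a \<in> C" if a: "a \<in> C" for c a
    proof -
      have "[:c:] \<in> residues ?M" using dM N by (simp add: residues_def)
      then have "sm [:c:] a mod ?M \<in> C" using a by (rule L'(4))
      moreover have "degree a < degree ?M" using a L'(1) by (auto simp: residues_def)
      then have "smult c a mod ?M = smult c a"
        using degree_smult_le[of c a] by (intro mod_poly_less) simp
      ultimately show ?thesis by (simp add: sm_const)
    qed
    show "Tm N a \<in> C" if a: "a \<in> C" for a
    proof -
      have "monom 1 1 \<in> residues ?M" using dM N by (simp add: residues_def degree_monom_eq)
      then show ?thesis unfolding Tm_def using a by (rule L'(4))
    qed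
  qed
qed

lemma LI_D: assumes N: "N \<ge> 2" and LC: "LI (Xp N - 1) C" and inj: "inj th" and fin: "finite C"
  shows "LI (Xp N - 1) (euclid_dual N C)"
proof -
  let ?M = "Xp N - 1 :: 'a poly"
  let ?D = "euclid_dual N C"
  have N0: "N > 0" using N by simp
  have dM: "degree ?M = N" using N by (simp add: deg_M)
  have subC: "C \<subseteq> residues ?M" using LC by (rule LI_sub)
  have TC: "Tm N a \<in> C" if "a \<in> C" for a unfolding Tm_def using LC that by (rule LI_mult)
  have TCeq: "Tm N ` C = C"
  proof (rule endo_inj_surj)
    show "finite C" by (rule fin)
    show "Tm N ` C \<subseteq> C" using TC by blast
    show "inj_on (Tm N) C" using T_inj[OF N0 inj] subC by (rule inj_on_subset)
  qed
  show ?thesis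
  proof (rule LI_from_T[OF N])
    show "?D \<subseteq> residues ?M" using dM by (auto simp: euclid_dual_def residues_def)
    show "0 \<in> ?D" using N0 by (simp add: euclid_dual_def)
    show "a - b \<in> ?D" if "a \<in> ?D" "b \<in> ?D" for a b
      using that by (auto simp: euclid_dual_def degree_diff_less right_diff_distrib sum_subtractf)
    show "smult c a \<in> ?D" if "a \<in> ?D" for c a
    proof -
      have "degree (smult c a) < N" using that degree_smult_le[of c a]
        by (simp add: euclid_dual_def)
      moreover have "(\<Sum>i<N. coeff x i * coeff (smult c a) i) = 0" if "x \<in> C" for x
      proof -
        have "(\<Sum>i<N. coeff x i * coeff (smult c a) i) = c * (\<Sum>i<N. coeff x i * coeff a i)"
          by (simp add: sum_distrib_left mult.left_commute)
        then show ?thesis using \<open>a \<in> ?D\<close> \<open>x \<in> C\<close> by (simp add: euclid_dual_def)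
      qed
      ultimately show ?thesis by (simp add: euclid_dual_def)
    qed
    show "Tm N v \<in> ?D" if v: "v \<in> ?D" for v
    proof -
      have dv: "degree v < N" using v by (simp add: euclid_dual_def)
      have "(\<Sum>i<N. coeff c i * coeff (Tm N v) i) = 0" if c: "c \<in> C" for c
      proof -
        obtain c0 where c0: "c0 \<in> C" "c = Tm N c0" using c TCeq by blast
        have dc0: "degree c0 < N" using c0(1) subC dM by (auto simp: residues_def)
        have "(\<Sum>i<N. coeff c i * coeff (Tm N v) i) = th (\<Sum>i<N. coeff c0 i * coeff v i)"
          unfolding c0(2) by (rule ip_T[OF N0 dc0 dv])
        also have "(\<Sum>i<N. coeff c0 i * coeff v i) = 0" using v c0(1) by (simp add: euclid_dual_def)
        finally show ?thesis by simp
      qed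
      then show ?thesis using T_deg[OF N0] by (simp add: euclid_dual_def)
    qed
  qed
qed

end



context skewh
begin

lemma card_eq_crt: "inj_on f A \<Longrightarrow> C \<subseteq> A \<Longrightarrow> f ` C = X \<times> Y \<Longrightarrow> card C = card X * card Y"
  by (metis card_cartesian_product card_image inj_on_subset)

lemma eq_crt: "inj_on f A \<Longrightarrow> C \<subseteq> A \<Longrightarrow> D \<subseteq> A \<Longrightarrow> f ` C = f ` D \<Longrightarrow> C = D"
  by (simp add: inj_on_image_eq_iff)

lemma part_a:
  assumes n0: "n > 0" and thn: "th ^^ n = id" and three: "(3::'a) \<noteq> 0" and inj: "inj th"
    and LC: "LI (Xp (3 * n) - 1) C" and fin: "finite C"
  shows "(let N = 3 * n; f1 = Xp n - 1; f2 = Xp (2 * n) + Xp n + 1;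
           crt = (\<lambda>a. (skew_mod th f1 a, skew_mod th f2 a));
           C1 = component th f1 C; C2 = component th f2 C;
           D = euclid_dual N C;
           D1 = component th f1 D; D2 = component th f2 D
       in Xp N - 1 = skew_mult th f1 f2 \<and>
          skew_central th f1 \<and> skew_central th f2 \<and> skew_coprime th f1 f2 \<and>
          bij_betw crt (residues (Xp N - 1)) (residues f1 \<times> residues f2) \<and>
          left_ideal_mod th f1 C1 \<and> left_ideal_mod th f2 C2 \<and>
          crt ` C = C1 \<times> C2 \<and>
          card C = card C1 * card C2 \<and>
          left_ideal_mod th f1 D1 \<and> left_ideal_mod th f2 D2 \<and>
          crt ` D = D1 \<times> D2 \<and>
          (C = D \<longleftrightarrow> C1 = D1 \<and> C2 = D2))"
proof -
  define N where "N = 3 * n"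
  define y where "y = (Xp n :: 'a poly)"
  define f1 where "f1 = (Xp n - 1 :: 'a poly)"
  define q where "q = (Xp (2 * n) + Xp n + 1 :: 'a poly)"
  define M where "M = (Xp N - 1 :: 'a poly)"
  define D where "D = euclid_dual N C"
  define crt where "crt = (\<lambda>a. (skew_mod th f1 a, skew_mod th q a))"
  have N2: "N \<ge> 2" using n0 by (simp add: N_def)
  have yy: "Xp (2 * n) = y * y" "Xp N = y * y * y"
    unfolding y_def N_def Xp_mult by (simp_all add: mult_2 numeral_3_eq_3 add.assoc)
  have f1y: "f1 = y - 1" and qy: "q = y * y + y + 1" unfolding f1_def q_def y_def yy by simp_all
  have MF: "M = f1 * q" unfolding M_def f1y qy yy cube ..
  have fxf1: "fixc f1" unfolding f1_def by (intro fixc_diff fixc_Xp fixc_one)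
  have fxq: "fixc q" unfolding q_def by (intro fixc_add fixc_Xp fixc_one)
  have fxM: "fixc M" unfolding M_def by (intro fixc_diff fixc_Xp fixc_one)
  have dM: "degree M = N" unfolding M_def using N2 by (simp add: deg_M)
  have df1: "degree f1 = n" unfolding f1_def using n0 by (simp add: deg_M)
  have dq: "degree q = 2 * n"
  proof -
    have "degree (Xp n + 1 :: 'a poly) \<le> n"
      by (rule degree_add_le) (simp_all add: Xp_def degree_monom_le)
    then have "degree (Xp n + 1 :: 'a poly) < degree (Xp (2 * n) :: 'a poly)"
      using n0 by (simp add: Xp_def degree_monom_eq)
    then have "degree (Xp (2 * n) + (Xp n + 1) :: 'a poly) = degree (Xp (2 * n) :: 'a poly)"
      by (rule degree_add_eq_left)
    then show ?thesis unfolding q_def by (simp add: add.assoc Xp_def degree_monom_eq)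
  qed
  have gf1: "good f1" using fxf1 df1 n0 by (simp add: good_def)
  have gq: "good q" using fxq dq n0 by (simp add: good_def)
  have gM: "good M" using fxM dM N2 by (simp add: good_def)
  have ysy: "ysub n y" unfolding y_def by (rule ysub_Xp) simp
  have ysf1: "ysub n f1" unfolding f1y by (intro ysub_diff ysy ysub_one)
  have ysq: "ysub n q" unfolding qy by (intro ysub_add ysub_mult ysy ysub_one)
  define u where "u = [:-(1/3):] * (y + 2)"
  define v where "v = [:1/3::'a:]"
  have ysu: "ysub n u" unfolding u_def num_const by (intro ysub_mult ysub_add ysub_const ysy)
  have ysv: "ysub n v" unfolding v_def by (rule ysub_const)
  have uv: "u * f1 + v * q = 1" unfolding u_def v_def f1y qy by (rule bez_id[OF three])
  have bz: "bez n f1 q (v * q) (u * f1)"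
    unfolding bez_def using uv ysu ysv ysf1 ysq by (simp add: add.commute ysub_mult)
  have smf1: "skew_mod th f1 = (\<lambda>a. a mod f1)" using smod_eq[OF gf1] by (simp add: fun_eq_iff)
  have smq: "skew_mod th q = (\<lambda>a. a mod q)" using smod_eq[OF gq] by (simp add: fun_eq_iff)
  have crt_eq: "crt = (\<lambda>a. (a mod f1, a mod q))" unfolding crt_def smf1 smq ..
  have dvd1: "f1 dvd M" and dvd2: "q dvd M" unfolding MF by simp_all
  have LC': "LI M C" using LC unfolding M_def N_def .
  have LD: "LI M D" unfolding D_def M_def by (rule LI_D[OF N2 LC'[unfolded M_def] inj fin])
  have M0: "M \<noteq> 0" using dM N2 by auto
  have injM: "inj_on crt (residues M)"
    unfolding crt_eq
  proof (rule inj_onI)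
    fix a b assume h: "a \<in> residues M" "b \<in> residues M" "(a mod f1, a mod q) = (b mod f1, b mod q)"
    from h(3) have e: "a mod f1 = b mod f1" "a mod q = b mod q" by simp_all
    show "a = b" by (rule inj2[OF bz MF h(1) h(2) e])
  qed
  have LR: "LI M (residues M)" using dM N2 by (intro LI_residues) simp
  have "crt ` residues M = cmp f1 (residues M) \<times> cmp q (residues M)"
    unfolding crt_eq by (rule crt2[OF LR gf1 gq dvd1 dvd2 thn bz])
  then have imM: "crt ` residues M = residues f1 \<times> residues q"
    by (simp only: comp_residues[OF gf1 dvd1 M0] comp_residues[OF gq dvd2 M0])
  have bij: "bij_betw crt (residues M) (residues f1 \<times> residues q)"
    unfolding bij_betw_def using injM imM by blast
  have LC1: "LI f1 (cmp f1 C)" by (rule LI_comp[OF LC' gf1 dvd1])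
  have LC2: "LI q (cmp q C)" by (rule LI_comp[OF LC' gq dvd2])
  have LD1: "LI f1 (cmp f1 D)" by (rule LI_comp[OF LD gf1 dvd1])
  have LD2: "LI q (cmp q D)" by (rule LI_comp[OF LD gq dvd2])
  have imC: "crt ` C = cmp f1 C \<times> cmp q C"
    unfolding crt_eq by (rule crt2[OF LC' gf1 gq dvd1 dvd2 thn bz])
  have imD: "crt ` D = cmp f1 D \<times> cmp q D"
    unfolding crt_eq by (rule crt2[OF LD gf1 gq dvd1 dvd2 thn bz])
  have subC: "C \<subseteq> residues M" using LC' by (rule LI_sub)
  have subD: "D \<subseteq> residues M" using LD by (rule LI_sub)
  have cardC: "card C = card (cmp f1 C) * card (cmp q C)"
    using injM subC imC by (rule card_eq_crt)
  have sd: "(C = D) = (cmp f1 C = cmp f1 D \<and> cmp q C = cmp q D)"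
  proof
    assume "cmp f1 C = cmp f1 D \<and> cmp q C = cmp q D"
    then have "crt ` C = crt ` D" using imC imD by simp
    then show "C = D" by (rule eq_crt[OF injM subC subD])
  qed simp
  have main: "M = sm f1 q \<and> skew_central th f1 \<and> skew_central th q \<and> skew_coprime th f1 q \<and>
          bij_betw crt (residues M) (residues f1 \<times> residues q) \<and>
          left_ideal_mod th f1 (component th f1 C) \<and> left_ideal_mod th q (component th q C) \<and>
          crt ` C = component th f1 C \<times> component th q C \<and>
          card C = card (component th f1 C) * card (component th q C) \<and>
          left_ideal_mod th f1 (component th f1 D) \<and> left_ideal_mod th q (component th q D) \<and>
          crt ` D = component th f1 D \<times> component th q D \<and>
          (C = D \<longleftrightarrow> component th f1 C = component th f1 D \<and> component th q C = component th q D)"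
  proof (intro conjI)
    show "M = sm f1 q" unfolding sm_fix[OF fxq] MF ..
    show "skew_central th f1" unfolding skew_central_def
      by (simp add: sm_ysub[OF ysf1 thn] sm_fix[OF fxf1] mult.commute)
    show "skew_central th q" unfolding skew_central_def
      by (simp add: sm_ysub[OF ysq thn] sm_fix[OF fxq] mult.commute)
    show "skew_coprime th f1 q" unfolding skew_coprime_def
      by (rule exI[of _ u], rule exI[of _ v]) (simp add: sm_fix[OF fxf1] sm_fix[OF fxq] uv)
  qed (simp_all only: comp_eq[OF gf1] comp_eq[OF gq] bij LI_left_ideal[OF gf1 LC1]
      LI_left_ideal[OF gq LC2] LI_left_ideal[OF gf1 LD1] LI_left_ideal[OF gq LD2] imC imD cardC sd)
  show ?thesis using main unfolding Let_def crt_def M_def D_def f1_def q_def N_def .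
qed

end



context skewh
begin

lemma part_b:
  assumes n0: "n > 0" and thn: "th ^^ n = id" and three: "(3::'a) \<noteq> 0" and inj: "inj th"
    and LC: "LI (Xp (3 * n) - 1) C" and fin: "finite C"
    and w3: "w ^ 3 = 1" and w1: "w \<noteq> 1" and thw: "th w = w"
  shows "(let N = 3 * n;
           f1 = Xp n - [:1:]; f2 = Xp n - [:w:]; f3 = Xp n - [:w ^ 2:];
           g1 = Xp n - [:1:]; g2 = Xp n - [:inverse w:];
           g3 = Xp n - [:inverse w ^ 2:];
           crt = (\<lambda>a. (skew_mod th f1 a, skew_mod th f2 a, skew_mod th f3 a));
           crt' = (\<lambda>a. (skew_mod th g1 a, skew_mod th g2 a, skew_mod th g3 a));
           C1 = component th f1 C; C2 = component th f2 C; C3 = component th f3 C;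
           D = euclid_dual N C;
           D1 = component th g1 D; D2 = component th g2 D; D3 = component th g3 D
       in bij_betw crt (residues (Xp N - 1)) (residues f1 \<times> residues f2 \<times> residues f3) \<and>
          bij_betw crt' (residues (Xp N - 1)) (residues g1 \<times> residues g2 \<times> residues g3) \<and>
          left_ideal_mod th f1 C1 \<and> left_ideal_mod th f2 C2 \<and> left_ideal_mod th f3 C3 \<and>
          crt ` C = C1 \<times> C2 \<times> C3 \<and>
          card C = card C1 * card C2 * card C3 \<and>
          left_ideal_mod th g1 D1 \<and> left_ideal_mod th g2 D2 \<and> left_ideal_mod th g3 D3 \<and>
          crt' ` D = D1 \<times> D2 \<times> D3 \<and>
          (C = D \<longleftrightarrow> C1 = D1 \<and> C2 = D3 \<and> C3 = D2))"
proof -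
  have w0: "w \<noteq> 0" using w3 by auto
  have inv1: "inverse w = w ^ 2"
    using w3 w0 by (simp add: field_simps power2_eq_square power3_eq_cube)
  have inv2: "inverse w ^ 2 = w"
    using w3 w0 by (simp add: field_simps power2_eq_square power3_eq_cube power_inverse)
  have inv3: "(w ^ 2) ^ 2 = w"
  proof -
    have "(w ^ 2) ^ 2 = w ^ 3 * w" by (simp add: power2_eq_square power3_eq_cube mult.assoc)
    then show ?thesis using w3 by simp
  qed
  have ww: "w - w ^ 2 \<noteq> 0"
  proof
    assume "w - w ^ 2 = 0"
    then have "w * (1 - w) = 0" by (simp add: algebra_simps power2_eq_square)
    then show False using w0 w1 by simp
  qed
  define N where "N = 3 * n"
  define y where "y = (Xp n :: 'a poly)"
  define f1 where "f1 = (Xp n - [:1:] :: 'a poly)"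
  define f2 where "f2 = (Xp n - [:w:] :: 'a poly)"
  define f3 where "f3 = (Xp n - [:w ^ 2:] :: 'a poly)"
  define q where "q = (Xp (2 * n) + Xp n + 1 :: 'a poly)"
  define M where "M = (Xp N - 1 :: 'a poly)"
  define D where "D = euclid_dual N C"
  define crt where "crt = (\<lambda>a. (skew_mod th f1 a, skew_mod th f2 a, skew_mod th f3 a))"
  define crt' where "crt' = (\<lambda>a. (skew_mod th f1 a, skew_mod th f3 a, skew_mod th f2 a))"
  have N2: "N \<ge> 2" using n0 by (simp add: N_def)
  have yy: "Xp (2 * n) = y * y" "Xp N = y * y * y"
    unfolding y_def N_def Xp_mult by (simp_all add: mult_2 numeral_3_eq_3 add.assoc)
  have f1y: "f1 = y - 1" unfolding f1_def y_def one_eq_const ..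
  have qy: "q = y * y + y + 1" unfolding q_def y_def yy by simp
  have MF: "M = f1 * q" unfolding M_def f1y qy yy cube ..
  have Gq: "q = f2 * f3" unfolding qy f2_def f3_def y_def[symmetric] omega_prod[OF w3 w1] ..
  have Gq': "q = f3 * f2" unfolding Gq by (simp add: mult.commute)
  have fxf1: "fixc f1" unfolding f1y y_def by (intro fixc_diff fixc_Xp fixc_one)
  have fxf2: "fixc f2" unfolding f2_def by (intro fixc_diff fixc_Xp fixc_const thw)
  have fxf3: "fixc f3" unfolding f3_def
    by (intro fixc_diff fixc_Xp fixc_const) (simp add: power2_eq_square th_mul thw)
  have fxq: "fixc q" unfolding q_def by (intro fixc_add fixc_Xp fixc_one)
  have fxM: "fixc M" unfolding M_def by (intro fixc_diff fixc_Xp fixc_one)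
  have dM: "degree M = N" unfolding M_def using N2 by (simp add: deg_M)
  have df1: "degree f1 = n" unfolding f1_def using n0 by (simp add: deg_xc Xp_def)
  have df2: "degree f2 = n" unfolding f2_def using n0 by (simp add: deg_xc Xp_def)
  have df3: "degree f3 = n" unfolding f3_def using n0 by (simp add: deg_xc Xp_def)
  have dq: "degree q = 2 * n"
  proof -
    have "degree (Xp n + 1 :: 'a poly) \<le> n"
      by (rule degree_add_le) (simp_all add: Xp_def degree_monom_le)
    then have "degree (Xp n + 1 :: 'a poly) < degree (Xp (2 * n) :: 'a poly)"
      using n0 by (simp add: Xp_def degree_monom_eq)
    then have "degree (Xp (2 * n) + (Xp n + 1) :: 'a poly) = degree (Xp (2 * n) :: 'a poly)"
      by (rule degree_add_eq_left)
    then show ?thesis unfolding q_def by (simp add: add.assoc Xp_def degree_monom_eq)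
  qed
  have gf1: "good f1" using fxf1 df1 n0 by (simp add: good_def)
  have gf2: "good f2" using fxf2 df2 n0 by (simp add: good_def)
  have gf3: "good f3" using fxf3 df3 n0 by (simp add: good_def)
  have gq: "good q" using fxq dq n0 by (simp add: good_def)
  have ysy: "ysub n y" unfolding y_def by (rule ysub_Xp) simp
  have ysf1: "ysub n f1" unfolding f1y by (intro ysub_diff ysy ysub_one)
  have ysf2: "ysub n f2" unfolding f2_def y_def[symmetric] by (intro ysub_diff ysy ysub_const)
  have ysf3: "ysub n f3" unfolding f3_def y_def[symmetric] by (intro ysub_diff ysy ysub_const)
  have ysq: "ysub n q" unfolding qy by (intro ysub_add ysub_mult ysy ysub_one)
  define u where "u = [:-(1/3):] * (y + 2)"
  define v where "v = [:1/3::'a:]"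
  have ysu: "ysub n u" unfolding u_def num_const by (intro ysub_mult ysub_add ysub_const ysy)
  have ysv: "ysub n v" unfolding v_def by (rule ysub_const)
  have uv: "u * f1 + v * q = 1" unfolding u_def v_def f1y qy by (rule bez_id[OF three])
  have bz: "bez n f1 q (v * q) (u * f1)"
    unfolding bez_def using uv ysu ysv ysf1 ysq by (simp add: add.commute ysub_mult)
  define d where "d = w - w ^ 2"
  have d0: "d \<noteq> 0" using ww by (simp add: d_def)
  have f32: "f3 - f2 = [:d:]" unfolding f3_def f2_def d_def by simp
  have e34: "[:1/d:] * f3 + [:-(1/d):] * f2 = 1"
  proof -
    have m: "[:-(1/d)::'a:] = - [:1/d:]" by simp
    have "[:1/d:] * f3 + [:-(1/d):] * f2 = [:1/d:] * (f3 - f2)" unfolding m by algebra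
    also have "\<dots> = 1" unfolding f32 using d0 by simp
    finally show ?thesis .
  qed
  have bz23: "bez n f2 f3 ([:1/d:] * f3) ([:-(1/d):] * f2)"
    unfolding bez_def by (intro conjI e34 dvd_triv_right ysub_mult ysub_const ysf2 ysf3)
  have bz32: "bez n f3 f2 ([:-(1/d):] * f2) ([:1/d:] * f3)" using bz23 by (rule bez_sym)
  have smf1: "skew_mod th f1 = (\<lambda>a. a mod f1)" using smod_eq[OF gf1] by (simp add: fun_eq_iff)
  have smf2: "skew_mod th f2 = (\<lambda>a. a mod f2)" using smod_eq[OF gf2] by (simp add: fun_eq_iff)
  have smf3: "skew_mod th f3 = (\<lambda>a. a mod f3)" using smod_eq[OF gf3] by (simp add: fun_eq_iff)
  have crt_eq: "crt = (\<lambda>a. (a mod f1, a mod f2, a mod f3))" unfolding crt_def smf1 smf2 smf3 ..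
  have crt'_eq: "crt' = (\<lambda>a. (a mod f1, a mod f3, a mod f2))" unfolding crt'_def smf1 smf2 smf3 ..
  have dvd1: "f1 dvd M" and dvdq: "q dvd M" unfolding MF by simp_all
  have dvd2: "f2 dvd M" and dvd3: "f3 dvd M" unfolding MF Gq by simp_all
  have LC': "LI M C" using LC unfolding M_def N_def .
  have LD: "LI M D" unfolding D_def M_def by (rule LI_D[OF N2 LC'[unfolded M_def] inj fin])
  have M0: "M \<noteq> 0" using dM N2 by auto
  have injM: "inj_on crt (residues M)"
    unfolding crt_eq
  proof (rule inj_onI)
    fix a b assume h: "a \<in> residues M" "b \<in> residues M"
      "(a mod f1, a mod f2, a mod f3) = (b mod f1, b mod f2, b mod f3)"
    from h(3) have e: "a mod f1 = b mod f1" "a mod f2 = b mod f2" "a mod f3 = b mod f3" by simp_all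
    show "a = b" by (rule inj3[OF bz bz23 MF Gq h(1) h(2) e])
  qed
  have injM': "inj_on crt' (residues M)"
    unfolding crt'_eq
  proof (rule inj_onI)
    fix a b assume h: "a \<in> residues M" "b \<in> residues M"
      "(a mod f1, a mod f3, a mod f2) = (b mod f1, b mod f3, b mod f2)"
    from h(3) have e: "a mod f1 = b mod f1" "a mod f3 = b mod f3" "a mod f2 = b mod f2" by simp_all
    show "a = b" by (rule inj3[OF bz bz32 MF Gq' h(1) h(2) e])
  qed
  have LR: "LI M (residues M)" using dM N2 by (intro LI_residues) simp
  have "crt ` residues M = cmp f1 (residues M) \<times> cmp f2 (residues M) \<times> cmp f3 (residues M)"
    unfolding crt_eq by (rule crt3[OF LR gf1 gf2 gf3 gq MF Gq thn bz bz23])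
  then have imM: "crt ` residues M = residues f1 \<times> residues f2 \<times> residues f3"
    by (simp only: comp_residues[OF gf1 dvd1 M0] comp_residues[OF gf2 dvd2 M0] comp_residues[OF gf3 dvd3 M0])
  have "crt' ` residues M = cmp f1 (residues M) \<times> cmp f3 (residues M) \<times> cmp f2 (residues M)"
    unfolding crt'_eq by (rule crt3[OF LR gf1 gf3 gf2 gq MF Gq' thn bz bz32])
  then have imM': "crt' ` residues M = residues f1 \<times> residues f3 \<times> residues f2"
    by (simp only: comp_residues[OF gf1 dvd1 M0] comp_residues[OF gf2 dvd2 M0] comp_residues[OF gf3 dvd3 M0])
  have bij: "bij_betw crt (residues M) (residues f1 \<times> residues f2 \<times> residues f3)"
    unfolding bij_betw_def using injM imM by blast
  have bij': "bij_betw crt' (residues M) (residues f1 \<times> residues f3 \<times> residues f2)"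
    unfolding bij_betw_def using injM' imM' by blast
  have LC1: "LI f1 (cmp f1 C)" by (rule LI_comp[OF LC' gf1 dvd1])
  have LC2: "LI f2 (cmp f2 C)" by (rule LI_comp[OF LC' gf2 dvd2])
  have LC3: "LI f3 (cmp f3 C)" by (rule LI_comp[OF LC' gf3 dvd3])
  have LD1: "LI f1 (cmp f1 D)" by (rule LI_comp[OF LD gf1 dvd1])
  have LD2: "LI f2 (cmp f2 D)" by (rule LI_comp[OF LD gf2 dvd2])
  have LD3: "LI f3 (cmp f3 D)" by (rule LI_comp[OF LD gf3 dvd3])
  have imC: "crt ` C = cmp f1 C \<times> cmp f2 C \<times> cmp f3 C"
    unfolding crt_eq by (rule crt3[OF LC' gf1 gf2 gf3 gq MF Gq thn bz bz23])
  have imD: "crt ` D = cmp f1 D \<times> cmp f2 D \<times> cmp f3 D"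
    unfolding crt_eq by (rule crt3[OF LD gf1 gf2 gf3 gq MF Gq thn bz bz23])
  have imD': "crt' ` D = cmp f1 D \<times> cmp f3 D \<times> cmp f2 D"
    unfolding crt'_eq by (rule crt3[OF LD gf1 gf3 gf2 gq MF Gq' thn bz bz32])
  have subC: "C \<subseteq> residues M" using LC' by (rule LI_sub)
  have subD: "D \<subseteq> residues M" using LD by (rule LI_sub)
  have cardC: "card C = card (cmp f1 C) * card (cmp f2 C) * card (cmp f3 C)"
  proof -
    have "card C = card (crt ` C)" by (rule card_image[symmetric, OF inj_on_subset[OF injM subC]])
    also have "\<dots> = card (cmp f1 C) * (card (cmp f2 C) * card (cmp f3 C))"
      unfolding imC by (simp add: card_cartesian_product)
    finally show ?thesis by (simp add: mult.assoc)
  qed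
  have sd: "(C = D) = (cmp f1 C = cmp f1 D \<and> cmp f2 C = cmp f2 D \<and> cmp f3 C = cmp f3 D)"
  proof
    assume "cmp f1 C = cmp f1 D \<and> cmp f2 C = cmp f2 D \<and> cmp f3 C = cmp f3 D"
    then have "crt ` C = crt ` D" using imC imD by simp
    then show "C = D" by (rule eq_crt[OF injM subC subD])
  qed simp
  have main: "bij_betw crt (residues M) (residues f1 \<times> residues f2 \<times> residues f3) \<and>
          bij_betw crt' (residues M) (residues f1 \<times> residues f3 \<times> residues f2) \<and>
          left_ideal_mod th f1 (component th f1 C) \<and> left_ideal_mod th f2 (component th f2 C) \<and>
          left_ideal_mod th f3 (component th f3 C) \<and>
          crt ` C = component th f1 C \<times> component th f2 C \<times> component th f3 C \<and>
          card C = card (component th f1 C) * card (component th f2 C) * card (component th f3 C) \<and>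
          left_ideal_mod th f1 (component th f1 D) \<and> left_ideal_mod th f3 (component th f3 D) \<and>
          left_ideal_mod th f2 (component th f2 D) \<and>
          crt' ` D = component th f1 D \<times> component th f3 D \<times> component th f2 D \<and>
          (C = D \<longleftrightarrow> component th f1 C = component th f1 D \<and> component th f2 C = component th f2 D \<and>
             component th f3 C = component th f3 D)"
    by (simp only: comp_eq[OF gf1] comp_eq[OF gf2] comp_eq[OF gf3] bij bij'
      LI_left_ideal[OF gf1 LC1] LI_left_ideal[OF gf2 LC2] LI_left_ideal[OF gf3 LC3]
      LI_left_ideal[OF gf1 LD1] LI_left_ideal[OF gf2 LD2] LI_left_ideal[OF gf3 LD3]
      imC imD' cardC sd simp_thms)
  show ?thesis using main unfolding Let_def inv1 inv3 crt_def crt'_def M_def D_def f1_def f2_def f3_def N_def .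
qed

end



lemma three_dvd_card:
  assumes h: "(3::'a::field) = 0"
  shows "finite (A::'a set) \<Longrightarrow> (\<forall>y\<in>A. y + 1 \<in> A) \<Longrightarrow> 3 dvd card A"
proof (induction "card A" arbitrary: A rule: less_induct)
  case less
  have two: "(2::'a) = - 1"
  proof -
    have "(2::'a) + 1 = 0" using h by simp
    then show ?thesis by (simp add: eq_neg_iff_add_eq_0)
  qed
  show ?case
  proof (cases "A = {}")
    case True
    then show ?thesis by simp
  next
    case False
    then obtain x where x: "x \<in> A" by blast
    define Orb where "Orb = {x, x + 1, x - 1}"
    have x1: "x + 1 \<in> A" using less.prems(2) x by blast
    have x2: "x - 1 \<in> A"
    proof -
      have "(x + 1) + 1 \<in> A" using less.prems(2) x1 by blast
      moreover have "(x + 1) + 1 = x - 1" using two by (simp add: add.assoc one_add_one)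
      ultimately show ?thesis by simp
    qed
    have OrbA: "Orb \<subseteq> A" using x x1 x2 by (auto simp: Orb_def)
    have ne2: "(1::'a) \<noteq> - 1"
    proof
      assume "(1::'a) = - 1"
      then have "(2::'a) = 0" by (simp add: eq_neg_iff_add_eq_0)
      then show False using two by simp
    qed
    have ne: "x \<noteq> x + 1" "x \<noteq> x - 1" "x + 1 \<noteq> x - 1"
      using ne2 by (auto simp: algebra_simps)
    have cO: "card Orb = 3" unfolding Orb_def using ne by simp
    define A' where "A' = A - Orb"
    have fA': "finite A'" using less.prems(1) by (simp add: A'_def)
    have cA: "card A = card A' + 3"
    proof -
      have "card A' = card A - card Orb" unfolding A'_def
        using OrbA less.prems(1) by (intro card_Diff_subset) (auto intro: finite_subset)
      moreover have "card Orb \<le> card A" using OrbA less.prems(1) by (rule card_mono[rotated])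
      ultimately show ?thesis using cO by simp
    qed
    have clA': "\<forall>y\<in>A'. y + 1 \<in> A'"
    proof
      fix y assume y: "y \<in> A'"
      then have yA: "y \<in> A" and yO: "y \<notin> Orb" by (auto simp: A'_def)
      have "y + 1 \<in> A" using less.prems(2) yA by blast
      moreover have "y + 1 \<notin> Orb"
      proof
        assume "y + 1 \<in> Orb"
        then have "y + 1 = x \<or> y + 1 = x + 1 \<or> y + 1 = x - 1" by (simp add: Orb_def)
        moreover have "y + 1 = x - 1 \<Longrightarrow> y = x + 1"
        proof -
          assume "y + 1 = x - 1"
          then have "y = x - 1 - 1" by (simp add: algebra_simps)
          also have "x - 1 - 1 = x + 1" using ne2 two by (simp add: algebra_simps)
          finally show ?thesis .
        qed
        ultimately have "y = x - 1 \<or> y = x \<or> y = x + 1" by (auto simp: algebra_simps)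
        then show False using yO by (auto simp: Orb_def)
      qed
      ultimately show "y + 1 \<in> A'" by (simp add: A'_def)
    qed
    have "card A' < card A" using cA by simp
    then have "3 dvd card A'" using fA' clA' by (rule less.hyps)
    then show ?thesis using cA by simp
  qed
qed

lemma three_ne:
  fixes p m :: nat
  assumes "prime p" "p mod 3 = 2" "CARD('a::{finite,field}) = p ^ m"
  shows "(3::'a) \<noteq> 0"
proof
  assume h: "(3::'a) = 0"
  have "3 dvd CARD('a)" using three_dvd_card[OF h, of UNIV] by simp
  then have "3 dvd p ^ m" using assms(3) by simp
  moreover have "prime (3::nat)" by simp
  ultimately have "3 dvd p" by (rule prime_dvd_power[rotated])
  then have "p = 3" using assms(1) by (metis prime_nat_iff numeral_eq_one_iff semiring_norm(86))
  then show False using assms(2) by simp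
qed

context skewh
begin

lemma th_pow: "th (a ^ k) = th a ^ k"
  by (induction k) (auto simp: th_mul th_one)

lemma fix_omega: assumes inj: "inj th" and thn: "th ^^ n = id" and odd: "odd n"
  and w3: "w ^ 3 = 1" and w1: "w \<noteq> 1"
  shows "th w = w"
proof -
  define t where "t = th w"
  have w0: "w \<noteq> 0" using w3 by auto
  have s: "1 + w + w^2 = 0"
  proof -
    have "(w - 1) * (1 + w + w^2) = w^3 - 1" by (simp add: algebra_simps power2_eq_square power3_eq_cube)
    then show ?thesis using w3 w1 by simp
  qed
  have t3: "t ^ 3 = 1" unfolding t_def th_pow[symmetric] w3 th_one ..
  have t1: "t \<noteq> 1"
  proof
    assume "t = 1"
    then have "th w = th 1" unfolding t_def th_one .
    then show False using inj w1 by (simp add: inj_eq)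
  qed
  have st: "1 + t + t^2 = 0"
  proof -
    have "(t - 1) * (1 + t + t^2) = t^3 - 1" by (simp add: algebra_simps power2_eq_square power3_eq_cube)
    then show ?thesis using t3 t1 by simp
  qed
  have "(t - w) * (t - w^2) = 0"
  proof -
    have "(t - w) * (t - w^2) = (1 + t + t^2) - (1 + w + w^2) * t + (w^3 - 1)"
      by (simp add: algebra_simps power2_eq_square power3_eq_cube)
    then show ?thesis using s st w3 by simp
  qed
  then have "t = w \<or> t = w^2" by simp
  then show ?thesis
  proof
    assume tw: "t = w^2"
    have w4: "(w ^ 2) ^ 2 = w"
    proof -
      have "(w ^ 2) ^ 2 = w ^ 3 * w" by (simp add: power2_eq_square power3_eq_cube mult.assoc)
      then show ?thesis using w3 by simp
    qed
    have thw2: "th (w ^ 2) = w" unfolding th_pow t_def[symmetric] tw w4 ..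
    have it: "(th ^^ k) w = (if even k then w else w ^ 2)" for k
      by (induction k) (auto simp: t_def[symmetric] tw thw2)
    have "(th ^^ n) w = w ^ 2" using it[of n] odd by simp
    then have "w = w ^ 2" using thn by simp
    then have "w * (1 - w) = 0" by (simp add: algebra_simps power2_eq_square)
    then show ?thesis using w0 w1 by simp
  qed (simp add: t_def)
qed

end

theorem theorem4p3:
  fixes \<theta> :: "'a::{finite,field} \<Rightarrow> 'a" and p m s :: nat and C :: "'a poly set"
  assumes "prime p" and "odd p" and "p mod 3 = 2"
    and "CARD('a) = p ^ m"
    and "is_field_aut \<theta>" and "\<theta> ^^ (p ^ s) = id"
    and "skew_cyclic_code \<theta> (3 * p ^ s) C"
  shows
   "(odd m \<longrightarrow>
      (let N = 3 * p ^ s; f1 = Xp (p ^ s) - 1; f2 = Xp (2 * p ^ s) + Xp (p ^ s) + 1;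
           crt = (\<lambda>a. (skew_mod \<theta> f1 a, skew_mod \<theta> f2 a));
           C1 = component \<theta> f1 C; C2 = component \<theta> f2 C;
           D = euclid_dual N C;
           D1 = component \<theta> f1 D; D2 = component \<theta> f2 D
       in Xp N - 1 = skew_mult \<theta> f1 f2 \<and>
          skew_central \<theta> f1 \<and> skew_central \<theta> f2 \<and> skew_coprime \<theta> f1 f2 \<and>
          bij_betw crt (residues (Xp N - 1)) (residues f1 \<times> residues f2) \<and>
          left_ideal_mod \<theta> f1 C1 \<and> left_ideal_mod \<theta> f2 C2 \<and>
          crt ` C = C1 \<times> C2 \<and>
          card C = card C1 * card C2 \<and>
          left_ideal_mod \<theta> f1 D1 \<and> left_ideal_mod \<theta> f2 D2 \<and>
          crt ` D = D1 \<times> D2 \<and>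
          (C = D \<longleftrightarrow> C1 = D1 \<and> C2 = D2)))
    \<and>
    (even m \<longrightarrow>
      (\<forall>\<omega>::'a. \<omega> ^ 3 = 1 \<and> \<omega> \<noteq> 1 \<longrightarrow>
      (let N = 3 * p ^ s;
           f1 = Xp (p ^ s) - [:1:]; f2 = Xp (p ^ s) - [:\<omega>:]; f3 = Xp (p ^ s) - [:\<omega> ^ 2:];
           g1 = Xp (p ^ s) - [:1:]; g2 = Xp (p ^ s) - [:inverse \<omega>:];
           g3 = Xp (p ^ s) - [:inverse \<omega> ^ 2:];
           crt = (\<lambda>a. (skew_mod \<theta> f1 a, skew_mod \<theta> f2 a, skew_mod \<theta> f3 a));
           crt' = (\<lambda>a. (skew_mod \<theta> g1 a, skew_mod \<theta> g2 a, skew_mod \<theta> g3 a));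
           C1 = component \<theta> f1 C; C2 = component \<theta> f2 C; C3 = component \<theta> f3 C;
           D = euclid_dual N C;
           D1 = component \<theta> g1 D; D2 = component \<theta> g2 D; D3 = component \<theta> g3 D
       in bij_betw crt (residues (Xp N - 1)) (residues f1 \<times> residues f2 \<times> residues f3) \<and>
          bij_betw crt' (residues (Xp N - 1)) (residues g1 \<times> residues g2 \<times> residues g3) \<and>
          left_ideal_mod \<theta> f1 C1 \<and> left_ideal_mod \<theta> f2 C2 \<and> left_ideal_mod \<theta> f3 C3 \<and>
          crt ` C = C1 \<times> C2 \<times> C3 \<and>
          card C = card C1 * card C2 * card C3 \<and>
          left_ideal_mod \<theta> g1 D1 \<and> left_ideal_mod \<theta> g2 D2 \<and> left_ideal_mod \<theta> g3 D3 \<and>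
          crt' ` D = D1 \<times> D2 \<times> D3 \<and>
          (C = D \<longleftrightarrow> C1 = D1 \<and> C2 = D3 \<and> C3 = D2))))"
proof -
  have bij: "bij \<theta>" and add: "\<And>a b. \<theta> (a + b) = \<theta> a + \<theta> b" and mul: "\<And>a b. \<theta> (a * b) = \<theta> a * \<theta> b"
    using assms(5) unfolding is_field_aut_def by auto
  have inj: "inj \<theta>" using bij by (rule bij_is_inj)
  have t0: "\<theta> 0 = 0"
  proof -
    have "\<theta> 0 + \<theta> 0 = \<theta> 0 + 0" using add[of 0 0] by simp
    then show ?thesis by (rule add_left_imp_eq)
  qed
  have t1: "\<theta> 1 = 1"
  proof -
    have ne: "\<theta> 1 \<noteq> 0"
    proof
      assume "\<theta> 1 = 0"
      then have "\<theta> 1 = \<theta> 0" using t0 by simp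
      then show False using inj by (simp add: inj_eq)
    qed
    have "\<theta> 1 * \<theta> 1 = \<theta> 1 * 1" using mul[of 1 1] by simp
    then show ?thesis using ne by simp
  qed
  interpret skewh \<theta> by unfold_locales (rule add, rule mul, rule t1)
  define n where "n = p ^ s"
  have n0: "n > 0" using assms(1) unfolding n_def by (simp add: prime_gt_0_nat)
  have thn: "\<theta> ^^ n = id" using assms(6) unfolding n_def .
  have oddn: "odd n" using assms(2) unfolding n_def by simp
  have three: "(3::'a) \<noteq> 0" by (rule three_ne[OF assms(1) assms(3) assms(4)])
  have N2: "3 * n \<ge> 2" using n0 by simp
  have LC: "LI (Xp (3 * n) - 1) C"
    using assms(7) unfolding skew_cyclic_code_def n_def[symmetric] by (rule LI_C[OF N2])
  have fin: "finite C" using LI_sub[OF LC] finite_residues by (rule finite_subset)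
  show ?thesis
  proof (intro conjI impI allI)
    show "(let N = 3 * p ^ s; f1 = Xp (p ^ s) - 1; f2 = Xp (2 * p ^ s) + Xp (p ^ s) + 1;
           crt = (\<lambda>a. (skew_mod \<theta> f1 a, skew_mod \<theta> f2 a));
           C1 = component \<theta> f1 C; C2 = component \<theta> f2 C;
           D = euclid_dual N C;
           D1 = component \<theta> f1 D; D2 = component \<theta> f2 D
       in Xp N - 1 = skew_mult \<theta> f1 f2 \<and>
          skew_central \<theta> f1 \<and> skew_central \<theta> f2 \<and> skew_coprime \<theta> f1 f2 \<and>
          bij_betw crt (residues (Xp N - 1)) (residues f1 \<times> residues f2) \<and>
          left_ideal_mod \<theta> f1 C1 \<and> left_ideal_mod \<theta> f2 C2 \<and>
          crt ` C = C1 \<times> C2 \<and>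
          card C = card C1 * card C2 \<and>
          left_ideal_mod \<theta> f1 D1 \<and> left_ideal_mod \<theta> f2 D2 \<and>
          crt ` D = D1 \<times> D2 \<and>
          (C = D \<longleftrightarrow> C1 = D1 \<and> C2 = D2))"
      using part_a[OF n0 thn three inj LC fin] unfolding n_def .
  next
    fix \<omega> :: 'a
    assume w: "\<omega> ^ 3 = 1 \<and> \<omega> \<noteq> 1"
    have thw: "\<theta> \<omega> = \<omega>" using fix_omega[OF inj thn oddn] w by blast
    show "(let N = 3 * p ^ s;
           f1 = Xp (p ^ s) - [:1:]; f2 = Xp (p ^ s) - [:\<omega>:]; f3 = Xp (p ^ s) - [:\<omega> ^ 2:];
           g1 = Xp (p ^ s) - [:1:]; g2 = Xp (p ^ s) - [:inverse \<omega>:];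
           g3 = Xp (p ^ s) - [:inverse \<omega> ^ 2:];
           crt = (\<lambda>a. (skew_mod \<theta> f1 a, skew_mod \<theta> f2 a, skew_mod \<theta> f3 a));
           crt' = (\<lambda>a. (skew_mod \<theta> g1 a, skew_mod \<theta> g2 a, skew_mod \<theta> g3 a));
           C1 = component \<theta> f1 C; C2 = component \<theta> f2 C; C3 = component \<theta> f3 C;
           D = euclid_dual N C;
           D1 = component \<theta> g1 D; D2 = component \<theta> g2 D; D3 = component \<theta> g3 D
       in bij_betw crt (residues (Xp N - 1)) (residues f1 \<times> residues f2 \<times> residues f3) \<and>
          bij_betw crt' (residues (Xp N - 1)) (residues g1 \<times> residues g2 \<times> residues g3) \<and>
          left_ideal_mod \<theta> f1 C1 \<and> left_ideal_mod \<theta> f2 C2 \<and> left_ideal_mod \<theta> f3 C3 \<and>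
          crt ` C = C1 \<times> C2 \<times> C3 \<and>
          card C = card C1 * card C2 * card C3 \<and>
          left_ideal_mod \<theta> g1 D1 \<and> left_ideal_mod \<theta> g2 D2 \<and> left_ideal_mod \<theta> g3 D3 \<and>
          crt' ` D = D1 \<times> D2 \<times> D3 \<and>
          (C = D \<longleftrightarrow> C1 = D1 \<and> C2 = D3 \<and> C3 = D2))"
      using part_b[OF n0 thn three inj LC fin _ _ thw] w unfolding n_def by blast
  qed
qed


end
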